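(* Fix a permutation $\pi_\alpha$ of $\mathcal{I}_L$ and $k\in\mathcal{I}_{2L-1}$, and let $\mathcal{M}_k=\{m\in\mathcal{I}_L: k\in\mathcal{J}_{\pi_\alpha^{-1}(m)}\}$. Then $|\mathcal{M}_k|=|\mathcal{L}_k|$, and the square submatrix $A(\mathcal{M}_k,\mathcal{L}_k)$ is invertible over $\mathbb{F}_\gamma$.
   Context: $\mathcal{I}_j=\{1,\dots,j\}$, $\mathcal{I}_0=\emptyset$, $\overline{\mathcal{S}}=\mathcal{I}_L\setminus\mathcal{S}$. Let $\gamma$ be a prime and $\Lambda_1\subseteq\Lambda_2\subseteq\cdots\subseteq\Lambda_{2L}$ a chain of nested lattices in $\mathbb{R}^n$. Let $\pi$ be a permutation of $\mathcal{I}_{2L}$ with $\Lambda_{\pi(2l-1)}\subseteq\Lambda_{\pi(2l)}$ for $l\in\mathcal{I}_L$, and set $\Lambda_{s,l}=\Lambda_{\pi(2l-1)}$, $\Lambda_{c,l}=\Lambda_{\pi(2l)}$. For $k\in\mathcal{I}_{2L-1}$, $\mathcal{L}_k=\{l\in\mathcal{I}_L:\Lambda_{s,l}\subseteq\Lambda_k\subseteq\Lambda_{k+1}\subseteq\Lambda_{c,l}\}$. $A=(a_{ml})\in\mathbb{Z}^{L\times L}$ is an integer matrix whose reduction mod $\gamma$ is invertible over $\mathbb{F}_\gamma$; $A(\mathcal{S},\mathcal{S}')$ is the submatrix with rows indexed by $\mathcal{S}$ and columns by $\mathcal{S}'$ (in increasing order); ranks and invertibility are over $\mathbb{F}_\gamma$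 after reduction mod $\gamma$, a matrix with no rows or no columns has rank $0$, and the $0\times0$ matrix counts as invertible. For a permutation $\pi_\alpha$ of $\mathcal{I}_L$, $\Pi_\alpha(\mathcal{S})=\{\pi_\alpha(i):i\in\mathcal{S}\}$ and for $m\in\mathcal{I}_L$, $\mathcal{J}_m=\{k\in\mathcal{I}_{2L-1}:\operatorname{rank}A(\Pi_\alpha(\overline{\mathcal{I}_{m-1}}),\mathcal{L}_k)=\operatorname{rank}A(\Pi_\alpha(\overline{\mathcal{I}_m}),\mathcal{L}_k)+1\}$. *)

theory Defs
  imports "HOL-Analysis.Analysis" "Jordan_Normal_Form.DL_Rank" "Jordan_Normal_Form.DL_Submatrix"
    "Berlekamp_Zassenhaus.Finite_Field"
begin

definition is_lattice :: "(real ^ 'n) set \<Rightarrow> bool" where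
  "is_lattice \<Lambda> \<longleftrightarrow> (\<exists>B :: real ^ 'n ^ 'n. invertible B \<and>
      \<Lambda> = {B *v z | z. \<forall>i. z $ i \<in> \<int>})"

definition Iset :: "nat \<Rightarrow> nat set" where "Iset j = {1..j}"
definition Icompl :: "nat \<Rightarrow> nat set \<Rightarrow> nat set" where "Icompl L S = Iset L - S"

text \<open>Reduction mod gamma of an integer matrix; the field F_gamma is the type 'p mod_ring,
  gamma = CARD('p).\<close>
definition red :: "int mat \<Rightarrow> 'p::prime_card mod_ring mat" where
  "red A = map_mat of_int A"

text \<open>Submatrix A(S,S') with 1-based row/column index sets (entries of the JNF matrix are 0-based),
  rows and columns taken in increasing order, reduced mod gamma.\<close>
definition subA :: "int mat \<Rightarrow> nat set \<Rightarrow> nat set \<Rightarrow> 'p::prime_card mod_ring mat" where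
  "subA A S S' = submatrix (red A) ((\<lambda>i. i - 1) ` (S \<inter> {1..})) ((\<lambda>j. j - 1) ` (S' \<inter> {1..}))"

definition rankF :: "'p::prime_card mod_ring mat \<Rightarrow> nat" where
  "rankF M = vec_space.rank (dim_row M) M"

definition Lset :: "nat \<Rightarrow> (nat \<Rightarrow> 'v set) \<Rightarrow> (nat \<Rightarrow> nat) \<Rightarrow> nat \<Rightarrow> nat set" where
  "Lset L Lam \<pi> k = {l \<in> Iset L. Lam (\<pi> (2*l - 1)) \<subseteq> Lam k \<and> Lam k \<subseteq> Lam (k+1)
                                  \<and> Lam (k+1) \<subseteq> Lam (\<pi> (2*l))}"

definition Jset :: "'p::prime_card itself \<Rightarrow> nat \<Rightarrow> int mat \<Rightarrow> (nat \<Rightarrow> 'v set) \<Rightarrow> (nat \<Rightarrow> nat)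
                      \<Rightarrow> (nat \<Rightarrow> nat) \<Rightarrow> nat \<Rightarrow> nat set" where
  "Jset _ L A Lam \<pi> \<pi>\<alpha> m = {k \<in> Iset (2*L - 1).
      rankF (subA A (\<pi>\<alpha> ` Icompl L (Iset (m - 1))) (Lset L Lam \<pi> k) :: 'p mod_ring mat)
    = rankF (subA A (\<pi>\<alpha> ` Icompl L (Iset m)) (Lset L Lam \<pi> k) :: 'p mod_ring mat) + 1}"

end

theory Submission
  imports Defs
begin


definition dotc :: "nat \<Rightarrow> (nat \<Rightarrow> 'a::field) \<Rightarrow> (nat \<Rightarrow> 'a) \<Rightarrow> 'a" where
  "dotc c r x = (\<Sum>k<c. r k * x k)"
definition Zs :: "nat \<Rightarrow> (nat \<Rightarrow> 'a::field) set \<Rightarrow> (nat \<Rightarrow> 'a) set" where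
  "Zs c X = {x. (\<forall>k\<ge>c. x k = 0) \<and> (\<forall>r\<in>X. dotc c r x = 0)}"
definition indp :: "nat \<Rightarrow> (nat \<Rightarrow> 'a::field) set \<Rightarrow> nat set \<Rightarrow> bool" where
  "indp c X K = (K \<subseteq> {..<c} \<and> (\<forall>x. (\<forall>k. k \<notin> K \<longrightarrow> x k = 0) \<longrightarrow> (\<forall>r\<in>X. dotc c r x = 0) \<longrightarrow> (\<forall>k. x k = 0)))"
definition rk :: "nat \<Rightarrow> (nat \<Rightarrow> 'a::field) set \<Rightarrow> nat" where
  "rk c X = Max (card ` {K. indp c X K})"

lemma dotc_lin: "dotc c r (\<lambda>k. a * x k - b * y k) = a * dotc c r x - b * dotc c r y"
  by (simp add: dotc_def sum_subtractf sum_distrib_left algebra_simps)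

lemma dotc_zero: "dotc c r (\<lambda>k. 0) = 0" by (simp add: dotc_def)

lemma indp_fin: "finite {K. indp c X K}"
  by (rule finite_subset[of _ "Pow {..<c}"]) (auto simp: indp_def)

lemma indp_empty: "indp c X {}" by (auto simp: indp_def)

lemma rk_ge: "indp c X K \<Longrightarrow> card K \<le> rk c X"
  unfolding rk_def using indp_fin by (intro Max_ge) auto

lemma rk_ex: "\<exists>K. indp c X K \<and> card K = rk c X"
proof -
  have ne: "card ` {K. indp c X K} \<noteq> {}" using indp_empty[of c X] by blast
  have "rk c X \<in> card ` {K. indp c X K}" unfolding rk_def
    using Max_in[OF finite_imageI[OF indp_fin] ne] .
  then show ?thesis by auto
qed

lemma rk_le_c: "rk c X \<le> c"
proof -
  obtain K where "indp c X K" "card K = rk c X" using rk_ex by blast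
  then show ?thesis unfolding indp_def using card_mono[of "{..<c}" K] by auto
qed

lemma Zs_insert: "Zs c (insert r X) = Zs c X \<inter> {x. dotc c r x = 0}"
  by (auto simp: Zs_def)

lemma rk_insert_le: "rk c (insert r X) \<le> rk c X + 1"
proof -
  obtain K where K: "indp c (insert r X) K" "card K = rk c (insert r X)" using rk_ex by blast
  have Ksub: "K \<subseteq> {..<c}" using K(1) unfolding indp_def by auto
  show ?thesis
  proof (cases "indp c X K")
    case True then show ?thesis using rk_ge K by fastforce
  next
    case False
    from False Ksub obtain x0 k0 where x0: "\<forall>k. k\<notin>K \<longrightarrow> x0 k = 0" "\<forall>r\<in>X. dotc c r x0 = 0" "x0 k0 \<noteq> 0"
      unfolding indp_def by blast
    have k0K: "k0 \<in> K" using x0 by auto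
    have d0: "dotc c r x0 \<noteq> 0"
      using K(1) x0 unfolding indp_def by blast
    have "indp c X (K - {k0})"
      unfolding indp_def
    proof (intro conjI allI impI)
      show "K - {k0} \<subseteq> {..<c}" using Ksub by auto
      fix y k assume y: "\<forall>k. k \<notin> K - {k0} \<longrightarrow> y k = 0" "\<forall>r\<in>X. dotc c r y = 0"
      define z where "z = (\<lambda>k. dotc c r x0 * y k - dotc c r y * x0 k)"
      have zX: "\<forall>r'\<in>X. dotc c r' z = 0" using y x0 by (simp add: z_def dotc_lin)
      have zr: "dotc c r z = 0" by (simp add: z_def dotc_lin)
      have zK: "\<forall>k. k\<notin>K \<longrightarrow> z k = 0" using y x0 by (auto simp: z_def)
      have z0: "\<forall>k. z k = 0" using K(1) zX zr zK unfolding indp_def by blast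
      from z0[rule_format, of k0] have "dotc c r y * x0 k0 = 0" using y by (simp add: z_def)
      hence "dotc c r y = 0" using x0 by simp
      then show "y k = 0" using z0[rule_format, of k] d0 by (simp add: z_def)
    qed
    hence "card (K - {k0}) \<le> rk c X" by (rule rk_ge)
    moreover have "finite K" using Ksub finite_subset by blast
    ultimately show ?thesis using K k0K by (simp add: card_Diff_singleton)
  qed
qed

lemma rk_insert_gt_aux:
  assumes K: "indp c X K" "card K = rk c X"
  shows "\<forall>x. card {j. j\<notin>K \<and> x j \<noteq> 0} = n \<longrightarrow> (\<forall>j\<ge>c. x j = 0) \<longrightarrow> (\<forall>r'\<in>X. dotc c r' x = 0)
     \<longrightarrow> dotc c r x \<noteq> 0 \<longrightarrow> (\<exists>k z. k < c \<and> k \<notin> K \<and> (\<forall>j. j \<notin> insert k K \<longrightarrow> z j = 0)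
          \<and> (\<forall>r'\<in>X. dotc c r' z = 0) \<and> dotc c r z \<noteq> 0)"
proof (induction n rule: less_induct)
  case (less n)
  have Ksub: "K \<subseteq> {..<c}" using K(1) unfolding indp_def by auto
  have finK: "finite K" using Ksub finite_subset by blast
  show ?case
  proof (intro allI impI)
    fix x assume n: "card {j. j\<notin>K \<and> x j \<noteq> 0} = n" and xc: "\<forall>j\<ge>c. x j = 0"
      and xX: "\<forall>r'\<in>X. dotc c r' x = 0" and xr: "dotc c r x \<noteq> 0"
    have fin: "finite {j. j\<notin>K \<and> x j \<noteq> 0}"
      by (rule finite_subset[of _ "{..<c}"]) (use xc in \<open>auto simp: not_less[symmetric]\<close>)
    show "\<exists>k z. k < c \<and> k \<notin> K \<and> (\<forall>j. j \<notin> insert k K \<longrightarrow> z j = 0)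
          \<and> (\<forall>r'\<in>X. dotc c r' z = 0) \<and> dotc c r z \<noteq> 0"
    proof (cases "{j. j\<notin>K \<and> x j \<noteq> 0} = {}")
      case True
      then have "\<forall>k. x k = 0" using K(1) xX unfolding indp_def by blast
      then have "dotc c r x = 0" by (simp add: dotc_def)
      then show ?thesis using xr by simp
    next
      case False
      then obtain k1 where k1: "k1 \<notin> K" "x k1 \<noteq> 0" by auto
      have k1c: "k1 < c" using xc k1 not_less by blast
      have "\<not> indp c X (insert k1 K)"
      proof
        assume "indp c X (insert k1 K)"
        then have "card (insert k1 K) \<le> rk c X" by (rule rk_ge)
        then show False using K(2) k1 finK by simp
      qed
      moreover have "insert k1 K \<subseteq> {..<c}" using Ksub k1c by auto
      ultimately have "\<exists>w. (\<forall>k. k\<notin>insert k1 K \<longrightarrow> w k = 0) \<and> (\<forall>r\<in>X. dotc c r w = 0) \<and> \<not>(\<forall>k. w k = 0)"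
        unfolding indp_def by blast
      then obtain w j1 where w: "\<forall>k. k\<notin>insert k1 K \<longrightarrow> w k = 0" "\<forall>r\<in>X. dotc c r w = 0" "w j1 \<noteq> 0"
        by blast
      have wk1: "w k1 \<noteq> 0"
      proof
        assume "w k1 = 0"
        then have "\<forall>k. k\<notin>K \<longrightarrow> w k = 0" using w by auto
        then show False using K(1) w unfolding indp_def by blast
      qed
      show ?thesis
      proof (cases "dotc c r w = 0")
        case False
        then show ?thesis using k1 k1c w by blast
      next
        case True
        define x' where "x' = (\<lambda>j. 1 * x j - (x k1 / w k1) * w j)"
        have x'X: "\<forall>r'\<in>X. dotc c r' x' = 0" using xX w unfolding x'_def dotc_lin by simp
        have x'r: "dotc c r x' \<noteq> 0" using xr True unfolding x'_def dotc_lin by simp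
        have x'c: "\<forall>j\<ge>c. x' j = 0"
        proof (intro allI impI)
          fix j assume "c \<le> j"
          then have "j \<notin> K" "j \<noteq> k1" using Ksub k1c by auto
          then show "x' j = 0" using xc w \<open>c \<le> j\<close> by (simp add: x'_def)
        qed
        have sub: "{j. j\<notin>K \<and> x' j \<noteq> 0} \<subseteq> {j. j\<notin>K \<and> x j \<noteq> 0} - {k1}"
          using w wk1 by (auto simp: x'_def)
        have "card {j. j\<notin>K \<and> x' j \<noteq> 0} < n"
        proof -
          have "card {j. j\<notin>K \<and> x' j \<noteq> 0} \<le> card ({j. j\<notin>K \<and> x j \<noteq> 0} - {k1})"
            using sub fin by (intro card_mono) auto
          also have "\<dots> < n"
          proof -
            have m: "k1 \<in> {j. j\<notin>K \<and> x j \<noteq> 0}" using k1 by simp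
            have "card ({j. j\<notin>K \<and> x j \<noteq> 0} - {k1}) = card {j. j\<notin>K \<and> x j \<noteq> 0} - 1"
              using fin m by (simp add: card_Diff_singleton)
            moreover have "card {j. j\<notin>K \<and> x j \<noteq> 0} > 0" using fin m card_gt_0_iff by blast
            ultimately show ?thesis using n by simp
          qed
          finally show ?thesis .
        qed
        from less.IH[OF this, THEN spec, of x'] x'c x'X x'r show ?thesis by blast
      qed
    qed
  qed
qed

lemma rk_insert_gt:
  assumes x0: "x0 \<in> Zs c X" and d: "dotc c r x0 \<noteq> 0"
  shows "rk c X + 1 \<le> rk c (insert r X)"
proof -
  obtain K where K: "indp c X K" "card K = rk c X" using rk_ex by blast
  have Ksub: "K \<subseteq> {..<c}" using K(1) unfolding indp_def by auto
  have finK: "finite K" using Ksub finite_subset by blast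
  obtain k z where kz: "k < c" "k \<notin> K" "\<forall>j. j \<notin> insert k K \<longrightarrow> z j = 0"
     "\<forall>r'\<in>X. dotc c r' z = 0" "dotc c r z \<noteq> 0"
  proof -
    have "\<forall>j\<ge>c. x0 j = 0" "\<forall>r'\<in>X. dotc c r' x0 = 0" using x0 by (auto simp: Zs_def)
    from rk_insert_gt_aux[OF K, of "card {j. j\<notin>K \<and> x0 j \<noteq> 0}" r, THEN spec, of x0] this d
    show ?thesis using that by blast
  qed
  have zk: "z k \<noteq> 0"
  proof
    assume "z k = 0"
    then have "\<forall>j. j\<notin>K \<longrightarrow> z j = 0" using kz by auto
    then have "\<forall>j. z j = 0" using K(1) kz unfolding indp_def by blast
    then have "dotc c r z = 0" by (simp add: dotc_def)
    then show False using kz by simp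
  qed
  have "indp c (insert r X) (insert k K)"
    unfolding indp_def
  proof (intro conjI allI impI)
    show "insert k K \<subseteq> {..<c}" using Ksub kz by auto
    fix y j assume y: "\<forall>k'. k' \<notin> insert k K \<longrightarrow> y k' = 0" "\<forall>r'\<in>insert r X. dotc c r' y = 0"
    define t where "t = y k / z k"
    define y' where "y' = (\<lambda>j. 1 * y j - t * z j)"
    have "\<forall>j. j \<notin> K \<longrightarrow> y' j = 0"
    proof (intro allI impI)
      fix j assume "j \<notin> K"
      show "y' j = 0"
      proof (cases "j = k")
        case True then show ?thesis using zk by (simp add: y'_def t_def)
      next
        case False then show ?thesis using y kz \<open>j \<notin> K\<close> by (simp add: y'_def)
      qed
    qed
    moreover have "\<forall>r'\<in>X. dotc c r' y' = 0" using y kz unfolding y'_def dotc_lin by simp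
    ultimately have y'0: "\<forall>j. y' j = 0" using K(1) unfolding indp_def by blast
    then have "y' = (\<lambda>j. 0)" by auto
    then have "dotc c r y' = 0" by (simp add: dotc_zero)
    then have "t * dotc c r z = 0" using y unfolding y'_def dotc_lin by simp
    then have "t = 0" using kz by simp
    then have yk: "y k = 0" using zk unfolding t_def by simp
    show "y j = 0" using y'0[rule_format, of j] yk unfolding y'_def t_def by simp
  qed
  then have "card (insert k K) \<le> rk c (insert r X)" by (rule rk_ge)
  then show ?thesis using K kz finK by simp
qed

lemma rk_insert_eq:
  assumes "rk c (insert r X) = rk c X"
  shows "Zs c (insert r X) = Zs c X"
  using rk_insert_gt[of _ c X r] assms by (force simp: Zs_insert)

lemma rk_empty: "rk c ({}::(nat \<Rightarrow> 'a::field) set) = 0"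
proof -
  have "\<And>K. indp c ({}::(nat \<Rightarrow> 'a::field) set) K \<Longrightarrow> K = {}"
  proof (rule ccontr)
    fix K assume K: "indp c ({}::(nat \<Rightarrow> 'a::field) set) K" "K \<noteq> {}"
    then obtain k where k: "k \<in> K" by auto
    from K(1) have H: "\<forall>x. (\<forall>k. k\<notin>K \<longrightarrow> x k = 0) \<longrightarrow> (\<forall>k. x k = (0::'a))"
      unfolding indp_def by auto
    from H[THEN spec, of "\<lambda>j. if j = k then 1 else 0"] k
    have "\<forall>ka. (if ka = k then (1::'a) else 0) = 0" by auto
    then have "(if k = k then (1::'a) else 0) = 0" by blast
    then show False by simp
  qed
  then have "{K. indp c ({}::(nat \<Rightarrow> 'a::field) set) K} = {{}}" using indp_empty[of c "{}::(nat \<Rightarrow> 'a::field) set"] by auto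
  then show ?thesis unfolding rk_def by simp
qed

lemma rk_full:
  assumes "\<forall>x\<in>Zs c X. \<forall>k. x k = 0"
  shows "rk c X = c"
proof -
  have "indp c X {..<c}" using assms unfolding indp_def Zs_def by auto
  then have "c \<le> rk c X" using rk_ge by fastforce
  then show ?thesis using rk_le_c[of c X] by simp
qed

lemma indp_mono: "X \<subseteq> Y \<Longrightarrow> indp c X K \<Longrightarrow> indp c Y K"
  unfolding indp_def by blast

lemma rk_mono: "X \<subseteq> Y \<Longrightarrow> rk c X \<le> rk c Y"
proof -
  assume XY: "X \<subseteq> Y"
  obtain K where "indp c X K" "card K = rk c X" using rk_ex by blast
  then show ?thesis using indp_mono[OF XY] rk_ge by metis
qed

lemma count_drops:
  fixes g :: "nat \<Rightarrow> nat"
  assumes "\<forall>m\<in>{1..N}. g (m-1) = g m \<or> g (m-1) = g m + 1"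
  shows "card {m\<in>{1..N}. g (m-1) = g m + 1} + g N = g 0"
  using assms
proof (induction N)
  case 0 then show ?case by simp
next
  case (Suc N)
  have IH: "card {m\<in>{1..N}. g (m-1) = g m + 1} + g N = g 0" using Suc by auto
  have h: "g N = g (Suc N) \<or> g N = g (Suc N) + 1" using Suc.prems by (metis atLeastAtMost_iff diff_Suc_1 le_add1 plus_1_eq_Suc order_refl)
  have eq: "{m\<in>{1..Suc N}. g (m-1) = g m + 1} = {m\<in>{1..N}. g (m-1) = g m + 1} \<union> (if g N = g (Suc N) + 1 then {Suc N} else {})"
    by (auto simp: le_Suc_eq)
  show ?case
  proof (cases "g N = g (Suc N) + 1")
    case True
    then show ?thesis using IH unfolding eq by simp
  next
    case False
    then show ?thesis using IH h unfolding eq by simp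
  qed
qed

lemma P_step:
  assumes "1 \<le> m" "m \<le> N"
  shows "\<rho> ` f ` {Suc (m-1)..N} = insert (\<rho> (f m)) (\<rho> ` f ` {Suc m..N})"
proof -
  have "{Suc (m-1)..N} = insert m {Suc m..N}" using assms by auto
  then show ?thesis by simp
qed

lemma main_abs:
  fixes \<rho> :: "nat \<Rightarrow> nat \<Rightarrow> 'a::field" and f :: "nat \<Rightarrow> nat" and N c :: nat
  defines "P \<equiv> \<lambda>m. \<rho> ` f ` {Suc m..N}"
  defines "Dr \<equiv> {m\<in>{1..N}. rk c (P (m-1)) = rk c (P m) + 1}"
  shows "card Dr = rk c (P 0)" and "Zs c (\<rho> ` f ` Dr) = Zs c (P 0)"
proof -
  have Pstep: "P (m-1) = insert (\<rho> (f m)) (P m)" if "1 \<le> m" "m \<le> N" for m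
    unfolding P_def using P_step[OF that] by simp
  have dich: "rk c (P (m-1)) = rk c (P m) \<or> rk c (P (m-1)) = rk c (P m) + 1" if "m \<in> {1..N}" for m
    using Pstep[of m] that rk_insert_le[of c "\<rho> (f m)" "P m"] rk_mono[OF subset_insertI[of "P m" "\<rho> (f m)"], of c]
    by auto
  have PN: "P N = {}" unfolding P_def by simp
  have "card Dr + rk c (P N) = rk c (P 0)"
    unfolding Dr_def by (rule count_drops) (use dich in blast)
  moreover have "rk c (P N) = 0" unfolding PN by (rule rk_empty)
  ultimately show "card Dr = rk c (P 0)" by simp
  have Q: "Zs c (\<rho> ` f ` {m\<in>Dr. Suc j \<le> m}) = Zs c (P j)" if "j \<le> N" for j
    using that
  proof (induction j rule: inc_induct)
    case base
    have e: "{m\<in>Dr. Suc N \<le> m} = {}" unfolding Dr_def by auto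
    show ?case unfolding e PN by simp
  next
    case (step n)
    have sn: "1 \<le> Suc n" "Suc n \<le> N" using step by auto
    have Pn: "P n = insert (\<rho> (f (Suc n))) (P (Suc n))" using Pstep[OF sn] by simp
    show ?case
    proof (cases "Suc n \<in> Dr")
      case True
      have "{m\<in>Dr. Suc n \<le> m} = insert (Suc n) {m\<in>Dr. Suc (Suc n) \<le> m}" using True by auto
      then show ?thesis using step.IH Pn by (simp add: Zs_insert)
    next
      case False
      have "{m\<in>Dr. Suc n \<le> m} = {m\<in>Dr. Suc (Suc n) \<le> m}" using False by (auto simp: Suc_le_eq order.order_iff_strict)
      moreover have "rk c (P n) = rk c (P (Suc n))" using False dich[of "Suc n"] sn unfolding Dr_def by auto
      then have "Zs c (P n) = Zs c (P (Suc n))" using Pn rk_insert_eq by metis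
      ultimately show ?thesis using step.IH by simp
    qed
  qed
  have "{m\<in>Dr. Suc 0 \<le> m} = Dr" unfolding Dr_def by auto
  then show "Zs c (\<rho> ` f ` Dr) = Zs c (P 0)" using Q[of 0] by simp
qed



definition rowsB :: "nat \<Rightarrow> nat \<Rightarrow> 'a::field mat \<Rightarrow> (nat \<Rightarrow> 'a) set" where
  "rowsB s c B = {(\<lambda>k. if k < c then B $$ (r,k) else 0) | r. r < s}"

lemma sum_supp:
  assumes "S \<subseteq> {..<c}" "\<forall>k. k \<notin> S \<longrightarrow> x k = 0"
  shows "(\<Sum>k<(c::nat). f k * x k) = (\<Sum>k\<in>S. f k * (x k::'a::field))"
  using assms by (intro sum.mono_neutral_right) auto

lemma dot_rowsB:
  "(\<forall>row\<in>rowsB s c B. dotc c row x = 0) \<longleftrightarrow> (\<forall>r<s. (\<Sum>k<c. B $$ (r,k) * x k) = 0)"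
proof -
  have "dotc c (\<lambda>k. if k < c then B $$ (r,k) else 0) x = (\<Sum>k<c. B $$ (r,k) * x k)" for r
    unfolding dotc_def by (intro sum.cong) auto
  then show ?thesis unfolding rowsB_def by auto
qed

context vec_space
begin

lemma lincomb_cols:
  assumes B: "B \<in> carrier_mat n c" and K: "K \<subseteq> {..<c}" and inj: "inj_on (col B) K" and r: "r < n"
  shows "lincomb a (col B ` K) $ r = (\<Sum>k\<in>K. B $$ (r,k) * a (col B k))"
proof -
  have sub: "col B ` K \<subseteq> carrier_vec n" using B by auto
  have "lincomb a (col B ` K) $ r = (\<Sum>v\<in>col B ` K. a v * v $ r)"
    by (rule lincomb_index[OF r sub])
  also have "\<dots> = (\<Sum>k\<in>K. a (col B k) * col B k $ r)"
    by (subst sum.reindex[OF inj]) simp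
  also have "\<dots> = (\<Sum>k\<in>K. B $$ (r,k) * a (col B k))"
    using B K r by (intro sum.cong) auto
  finally show ?thesis .
qed

lemma colind:
  assumes B: "B \<in> carrier_mat n c" and K: "K \<subseteq> {..<c}"
  shows "indp c (rowsB n c B) K \<longleftrightarrow> inj_on (col B) K \<and> lin_indpt (col B ` K)"
proof
  assume ind: "indp c (rowsB n c B) K"
  then have H: "\<And>x. (\<forall>k. k \<notin> K \<longrightarrow> x k = 0) \<Longrightarrow> (\<forall>r<n. (\<Sum>k<c. B $$ (r,k) * x k) = 0) \<Longrightarrow> x k = 0" for k
    unfolding indp_def dot_rowsB by blast
  show "inj_on (col B) K \<and> lin_indpt (col B ` K)"
  proof
    show "inj_on (col B) K"
    proof (rule inj_onI, rule ccontr)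
      fix k1 k2 assume k: "k1 \<in> K" "k2 \<in> K" "col B k1 = col B k2" "k1 \<noteq> k2"
      define x where "x = (\<lambda>k. if k = k1 then 1 else if k = k2 then - 1 else (0::'a))"
      have xs: "\<forall>k. k \<notin> {k1,k2} \<longrightarrow> x k = 0" by (auto simp: x_def)
      have "\<forall>r<n. (\<Sum>k<c. B $$ (r,k) * x k) = 0"
      proof (intro allI impI)
        fix r assume r: "r < n"
        have "(\<Sum>k<c. B $$ (r,k) * x k) = (\<Sum>k\<in>{k1,k2}. B $$ (r,k) * x k)"
          using K k xs by (intro sum_supp) auto
        also have "\<dots> = B $$ (r,k1) - B $$ (r,k2)" using k by (simp add: x_def)
        also have "\<dots> = col B k1 $ r - col B k2 $ r"
        proof -
          have "k1 < c" "k2 < c" using K k by auto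
          then show ?thesis using B r by (simp add: carrier_matD index_col)
        qed
        finally show "(\<Sum>k<c. B $$ (r,k) * x k) = 0" using k by simp
      qed
      moreover have "\<forall>k. k \<notin> K \<longrightarrow> x k = 0" using k by (auto simp: x_def)
      ultimately have "x k1 = 0" using H by blast
      then show False by (simp add: x_def)
    qed
    show "lin_indpt (col B ` K)"
    proof
      assume "lin_dep (col B ` K)"
      then obtain A a v where A: "finite A" "A \<subseteq> col B ` K" "lincomb a A = 0\<^sub>v n" "v \<in> A" "a v \<noteq> 0"
        unfolding lin_dep_def by auto
      define K' where "K' = {k\<in>K. col B k \<in> A}"
      have K'A: "col B ` K' = A" using A(2) unfolding K'_def by auto
      have K'K: "K' \<subseteq> K" unfolding K'_def by auto
      have injK: "inj_on (col B) K" using \<open>inj_on (col B) K\<close> .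
      then have inj': "inj_on (col B) K'" using K'K inj_on_subset by blast
      define x where "x = (\<lambda>k. if k \<in> K' then a (col B k) else 0)"
      have "\<forall>r<n. (\<Sum>k<c. B $$ (r,k) * x k) = 0"
      proof (intro allI impI)
        fix r assume r: "r < n"
        have "(\<Sum>k<c. B $$ (r,k) * x k) = (\<Sum>k\<in>K'. B $$ (r,k) * x k)"
          using K K'K by (intro sum_supp) (auto simp: x_def)
        also have "\<dots> = (\<Sum>k\<in>K'. B $$ (r,k) * a (col B k))" by (intro sum.cong) (auto simp: x_def)
        also have "\<dots> = lincomb a A $ r"
          using lincomb_cols[OF B _ inj' r, of a] K K'K K'A by auto
        finally show "(\<Sum>k<c. B $$ (r,k) * x k) = 0" using A(3) r by simp
      qed
      moreover have "\<forall>k. k \<notin> K \<longrightarrow> x k = 0" using K'K by (auto simp: x_def)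
      ultimately have x0: "\<And>k. x k = 0" using H by blast
      obtain k0 where "k0 \<in> K'" "col B k0 = v" using K'A A(4) by blast
      then have "x k0 = a v" by (simp add: x_def)
      then show False using x0 A(5) by simp
    qed
  qed
next
  assume R: "inj_on (col B) K \<and> lin_indpt (col B ` K)"
  show "indp c (rowsB n c B) K"
    unfolding indp_def dot_rowsB
  proof (intro conjI allI impI)
    show "K \<subseteq> {..<c}" using K .
    fix x k0 assume xs: "\<forall>k. k \<notin> K \<longrightarrow> x k = 0" and xr: "\<forall>r<n. (\<Sum>k<c. B $$ (r,k) * x k) = 0"
    show "x k0 = 0"
    proof (rule ccontr)
      assume nz: "x k0 \<noteq> 0"
      then have k0K: "k0 \<in> K" using xs by auto
      define K' where "K' = {k\<in>K. x k \<noteq> 0}"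
      have K'K: "K' \<subseteq> K" unfolding K'_def by auto
      have inj': "inj_on (col B) K'" using R K'K inj_on_subset by blast
      define a where "a = (\<lambda>v. x (the_inv_into K' (col B) v))"
      have ak: "a (col B k) = x k" if "k \<in> K'" for k
        using the_inv_into_f_f[OF inj' that] by (simp add: a_def)
      have sub: "col B ` K' \<subseteq> carrier_vec n" using B by auto
      have finK': "finite K'" using K K'K by (meson finite_lessThan finite_subset subset_trans)
      have fin: "finite (col B ` K')" using finK' by simp
      have lc: "lincomb a (col B ` K') = 0\<^sub>v n"
      proof (rule eq_vecI)
        show "dim_vec (lincomb a (col B ` K')) = dim_vec (0\<^sub>v n)"
          using lincomb_dim[OF fin sub] by simp
        fix r assume "r < dim_vec (0\<^sub>v n)"
        then have r: "r < n" by simp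
        have "lincomb a (col B ` K') $ r = (\<Sum>k\<in>K'. B $$ (r,k) * a (col B k))"
          using lincomb_cols[OF B _ inj' r] K K'K by auto
        also have "\<dots> = (\<Sum>k\<in>K'. B $$ (r,k) * x k)" by (intro sum.cong) (auto simp: ak)
        also have "\<dots> = (\<Sum>k<c. B $$ (r,k) * x k)"
          using K K'K xs by (intro sum_supp[symmetric]) (auto simp: K'_def)
        finally show "lincomb a (col B ` K') $ r = 0\<^sub>v n $ r" using xr r by simp
      qed
      have "k0 \<in> K'" using k0K nz by (simp add: K'_def)
      then have "lin_dep (col B ` K)"
        unfolding lin_dep_def
        using fin lc ak[of k0] nz K'K by (intro exI[of _ "col B ` K'"] exI[of _ a] exI[of _ "col B k0"]) auto
      then show False using R by simp
    qed
  qed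
qed

lemma rank_bridge:
  assumes B: "B \<in> carrier_mat n c"
  shows "rank B = rk c (rowsB n c B)"
proof -
  obtain K where K: "indp c (rowsB n c B) K" "card K = rk c (rowsB n c B)" using rk_ex by blast
  have Ksub: "K \<subseteq> {..<c}" using K(1) unfolding indp_def by auto
  have KR: "inj_on (col B) K" "lin_indpt (col B ` K)" using colind[OF B Ksub] K(1) by auto
  have setcols: "set (cols B) = col B ` {..<c}" using B unfolding cols_def by auto
  have "maximal (col B ` K) (\<lambda>T. T \<subseteq> set (cols B) \<and> lin_indpt T)"
    unfolding maximal_def
  proof (intro conjI allI impI)
    show "col B ` K \<subseteq> set (cols B)" using Ksub setcols by auto
    show "lin_indpt (col B ` K)" using KR by simp
    fix T' assume T': "col B ` K \<subseteq> T' \<and> T' \<subseteq> set (cols B) \<and> lin_indpt T'"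
    define g where "g = (\<lambda>t. SOME k. k < c \<and> col B k = t)"
    have g: "g t < c \<and> col B (g t) = t" if "t \<in> T'" for t
    proof -
      have "\<exists>k. k < c \<and> col B k = t" using T' that setcols by auto
      then show ?thesis unfolding g_def by (rule someI_ex)
    qed
    define K' where "K' = K \<union> g ` (T' - col B ` K)"
    have K'sub: "K' \<subseteq> {..<c}" using Ksub g unfolding K'_def by auto
    have e: "col B ` g ` (T' - col B ` K) = T' - col B ` K"
    proof -
      have "col B ` g ` (T' - col B ` K) = (\<lambda>t. col B (g t)) ` (T' - col B ` K)" by (simp add: image_image)
      also have "\<dots> = (\<lambda>t. t) ` (T' - col B ` K)" using g by (intro image_cong) auto
      finally show ?thesis by simp
    qed
    have imK': "col B ` K' = T'" unfolding K'_def image_Un e using T' by auto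
    have injK': "inj_on (col B) K'"
    proof (rule inj_onI)
      fix k k' assume kk: "k \<in> K'" "k' \<in> K'" "col B k = col B k'"
      show "k = k'"
      proof (cases "k \<in> K")
        case True
        show ?thesis
        proof (cases "k' \<in> K")
          case True then show ?thesis using \<open>k \<in> K\<close> kk KR(1) inj_onD by metis
        next
          case False
          then obtain t where "t \<in> T' - col B ` K" "k' = g t" using kk unfolding K'_def by auto
          then show ?thesis using g kk \<open>k \<in> K\<close> by auto
        qed
      next
        case False
        then obtain t where t: "t \<in> T' - col B ` K" "k = g t" using kk unfolding K'_def by auto
        show ?thesis
        proof (cases "k' \<in> K")
          case True then show ?thesis using g t kk by auto
        next
          case False
          then obtain t' where t': "t' \<in> T' - col B ` K" "k' = g t'" using kk unfolding K'_def by auto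
          have "t = col B k" using g[of t] t by auto
          also have "\<dots> = col B k'" using kk by simp
          also have "\<dots> = t'" using g[of t'] t' by auto
          finally show ?thesis using t t' by simp
        qed
      qed
    qed
    have "indp c (rowsB n c B) K'" using colind[OF B K'sub] injK' imK' T' by simp
    then have "card K' \<le> card K" using rk_ge K(2) by metis
    moreover have "card K' = card T'" using card_image[OF injK'] imK' by simp
    moreover have "card K = card (col B ` K)" using card_image[OF KR(1)] by simp
    moreover have "finite T'" using T' by (meson List.finite_set finite_subset)
    ultimately have "card (col B ` K) = card T'" using T' card_mono[of T' "col B ` K"] by linarith
    then have "col B ` K = T'" using card_subset_eq[OF \<open>finite T'\<close>] T' by blast
    then show "T' = col B ` K" by simp
  qed
  then have "rank B = card (col B ` K)" by (rule rank_card_indpt[OF B])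
  then show ?thesis using card_image[OF KR(1)] K(2) by simp
qed

end



lemma mat_vec_sum:
  assumes "A \<in> carrier_mat n m" "v \<in> carrier_vec m" "i < n"
  shows "(A *\<^sub>v v) $ i = (\<Sum>j<m. A $$ (i,j) * v $ j)"
  using assms by (auto simp: scalar_prod_def atLeast0LessThan intro!: sum.cong)

lemma pick_bij: "finite I \<Longrightarrow> bij_betw (pick I) {..<card I} I"
proof -
  assume fin: "finite I"
  show ?thesis
    unfolding bij_betw_def
  proof (intro conjI)
    show "inj_on (pick I) {..<card I}"
    proof (rule inj_onI)
      fix a b assume ab: "a \<in> {..<card I}" "b \<in> {..<card I}" "pick I a = pick I b"
      show "a = b"
      proof (rule ccontr)
        assume "a \<noteq> b"
        then have "a < b \<or> b < a" by auto
        then show False using ab pick_mono[of b I a] pick_mono[of a I b] by auto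
      qed
    qed
    show "pick I ` {..<card I} = I"
    proof
      show "pick I ` {..<card I} \<subseteq> I" using pick_in_set by auto
      show "I \<subseteq> pick I ` {..<card I}"
      proof
        fix i assume i: "i \<in> I"
        have "{a\<in>I. a < i} \<subset> I" using i by auto
        then have "card {a\<in>I. a < i} < card I" by (rule psubset_card_mono[OF fin])
        then have "pick I (card {a\<in>I. a < i}) \<in> pick I ` {..<card I}" by simp
        then show "i \<in> pick I ` {..<card I}" unfolding pick_card_in_set[OF i] .
      qed
    qed
  qed
qed

lemma card_Lt: "I \<subseteq> {..<(L::nat)} \<Longrightarrow> {i. i < L \<and> i \<in> I} = I" by blast

lemma sub_carrier:
  assumes R: "R \<in> carrier_mat L L" and I: "I \<subseteq> {..<L}" and J: "J \<subseteq> {..<L}"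
  shows "submatrix R I J \<in> carrier_mat (card I) (card J)"
proof -
  have d: "dim_row R = L" "dim_col R = L" using R by auto
  show ?thesis unfolding carrier_mat_def mem_Collect_eq dim_submatrix d card_Lt[OF I] card_Lt[OF J] by simp
qed

lemma sub_entry:
  assumes R: "R \<in> carrier_mat L L" and I: "I \<subseteq> {..<L}" and J: "J \<subseteq> {..<L}"
    and r: "r < card I" and k: "k < card J"
  shows "submatrix R I J $$ (r,k) = R $$ (pick I r, pick J k)"
proof -
  have d: "dim_row R = L" "dim_col R = L" using R by auto
  show ?thesis by (rule submatrix_index) (use r k in \<open>simp_all add: d card_Lt[OF I] card_Lt[OF J]\<close>)
qed

definition rhoR :: "'a::field mat \<Rightarrow> nat set \<Rightarrow> nat \<Rightarrow> nat \<Rightarrow> 'a" where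
  "rhoR R C0 i = (\<lambda>k. if k < card C0 then R $$ (i, pick C0 k) else 0)"

lemma rowsB_sub:
  assumes R: "R \<in> carrier_mat L L" and I: "I \<subseteq> {..<L}" and J: "J \<subseteq> {..<L}"
  shows "rowsB (card I) (card J) (submatrix R I J) = rhoR R J ` I"
proof -
  have finI: "finite I" using I finite_subset by blast
  have bij: "bij_betw (pick I) {..<card I} I" using pick_bij[OF finI] .
  have "(\<lambda>k. if k < card J then submatrix R I J $$ (r,k) else 0) = rhoR R J (pick I r)" if "r < card I" for r
    using sub_entry[OF R I J that] by (auto simp: rhoR_def)
  then have "rowsB (card I) (card J) (submatrix R I J) = rhoR R J ` pick I ` {..<card I}"
    unfolding rowsB_def by (auto; metis)
  also have "\<dots> = rhoR R J ` I" using bij unfolding bij_betw_def by simp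
  finally show ?thesis .
qed

lemma rank_sub:
  assumes R: "R \<in> carrier_mat L L" and I: "I \<subseteq> {..<L}" and J: "J \<subseteq> {..<L}"
  shows "rankF (submatrix R I J) = rk (card J) (rhoR R J ` I)"
proof -
  have C: "submatrix R I J \<in> carrier_mat (card I) (card J)" by (rule sub_carrier[OF R I J])
  have "rankF (submatrix R I J) = vec_space.rank (card I) (submatrix R I J)"
    unfolding rankF_def using C by simp
  also have "\<dots> = rk (card J) (rowsB (card I) (card J) (submatrix R I J))"
    by (rule vec_space.rank_bridge[OF C])
  finally show ?thesis using rowsB_sub[OF R I J] by simp
qed

lemma inv_kernel:
  assumes R: "R \<in> carrier_mat L L" and inv: "invertible_mat R"
    and v: "v \<in> carrier_vec L" and Rv: "R *\<^sub>v v = 0\<^sub>v L"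
  shows "v = 0\<^sub>v L"
proof -
  obtain B where B: "R * B = 1\<^sub>m (dim_row R)" "B * R = 1\<^sub>m (dim_row B)"
    using inv unfolding invertible_mat_def inverts_mat_def by blast
  have "dim_col (B * R) = L" using R by simp
  then have rB: "dim_row B = L" using B(2) by simp
  have "dim_col (R * B) = L" using B(1) R by simp
  then have cB: "dim_col B = L" by simp
  have Bc: "B \<in> carrier_mat L L" using rB cB by auto
  have "v = 1\<^sub>m L *\<^sub>v v" using v by simp
  also have "\<dots> = (B * R) *\<^sub>v v" using B(2) rB by simp
  also have "\<dots> = B *\<^sub>v (R *\<^sub>v v)" using Bc R v by simp
  also have "\<dots> = 0\<^sub>v L" unfolding Rv using Bc by (intro eq_vecI) (auto simp: scalar_prod_def)
  finally show ?thesis .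
qed

lemma full_zero:
  assumes R: "R \<in> carrier_mat L L" and inv: "invertible_mat R" and C0: "C0 \<subseteq> {..<L}"
  shows "\<forall>x\<in>Zs (card C0) (rhoR R C0 ` {..<L}). \<forall>k. x k = 0"
proof (intro ballI allI)
  fix x k assume x: "x \<in> Zs (card C0) (rhoR R C0 ` {..<L})"
  define c where "c = card C0"
  have finC: "finite C0" using C0 finite_subset by blast
  have bij: "bij_betw (pick C0) {..<c} C0" unfolding c_def by (rule pick_bij[OF finC])
  define idx where "idx = (\<lambda>j. card {a\<in>C0. a < j})"
  have idxp: "idx (pick C0 k) = k" if "k < c" for k
    using card_pick[of k C0] that unfolding idx_def c_def by auto
  define v where "v = vec L (\<lambda>j. if j \<in> C0 then x (idx j) else 0)"
  have vc: "v \<in> carrier_vec L" unfolding v_def by simp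
  have "R *\<^sub>v v = 0\<^sub>v L"
  proof (rule eq_vecI)
    show "dim_vec (R *\<^sub>v v) = dim_vec (0\<^sub>v L)" using R by simp
    fix i assume "i < dim_vec (0\<^sub>v L)"
    then have i: "i < L" by simp
    have "(R *\<^sub>v v) $ i = (\<Sum>j<L. R $$ (i,j) * v $ j)" by (rule mat_vec_sum[OF R vc i])
    also have "\<dots> = (\<Sum>j\<in>C0. R $$ (i,j) * v $ j)"
      using C0 by (intro sum.mono_neutral_right) (auto simp: v_def)
    also have "\<dots> = (\<Sum>j\<in>C0. R $$ (i,j) * x (idx j))"
      using C0 by (intro sum.cong) (auto simp: v_def)
    also have "\<dots> = (\<Sum>k<c. R $$ (i,pick C0 k) * x (idx (pick C0 k)))"
      by (rule sum.reindex_bij_betw[OF bij, symmetric])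
    also have "\<dots> = (\<Sum>k<c. R $$ (i,pick C0 k) * x k)"
      by (intro sum.cong) (auto simp: idxp)
    also have "\<dots> = dotc c (rhoR R C0 i) x"
      unfolding dotc_def rhoR_def c_def by (intro sum.cong) auto
    also have "\<dots> = 0" using x i unfolding Zs_def c_def by auto
    finally show "(R *\<^sub>v v) $ i = 0\<^sub>v L $ i" using i by simp
  qed
  then have v0: "v = 0\<^sub>v L" using inv_kernel[OF R inv vc] by simp
  show "x k = 0"
  proof (cases "k < c")
    case True
    have pk: "pick C0 k \<in> C0" using pick_in_set[of k C0] True unfolding c_def by auto
    then have "pick C0 k < L" using C0 by auto
    then have "v $ pick C0 k = x k" using pk idxp[OF True] by (simp add: v_def)
    then show ?thesis using v0 \<open>pick C0 k < L\<close> by simp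
  next
    case False
    then show ?thesis using x unfolding Zs_def c_def by auto
  qed
qed

lemma inv_sub:
  assumes R: "R \<in> carrier_mat L L" and M: "M \<subseteq> {..<L}" and C0: "C0 \<subseteq> {..<L}"
    and cM: "card M = card C0"
    and Z: "\<forall>x\<in>Zs (card C0) (rhoR R C0 ` M). \<forall>k. x k = (0::'a::field)"
  shows "invertible_mat (submatrix R M C0)"
proof -
  define c where "c = card C0"
  define Bm where "Bm = submatrix R M C0"
  have Bc: "Bm \<in> carrier_mat c c" using sub_carrier[OF R M C0] cM unfolding Bm_def c_def by simp
  have rows: "rowsB c c Bm = rhoR R C0 ` M" using rowsB_sub[OF R M C0] cM unfolding Bm_def c_def by simp
  have "det Bm \<noteq> 0"
  proof
    assume "det Bm = 0"
    then obtain v where v: "v \<in> carrier_vec c" "v \<noteq> 0\<^sub>v c" "Bm *\<^sub>v v = 0\<^sub>v c"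
      using det_0_iff_vec_prod_zero_field[OF Bc] by blast
    define x where "x = (\<lambda>k. if k < c then v $ k else 0)"
    have "\<forall>r<c. (\<Sum>k<c. Bm $$ (r,k) * x k) = 0"
    proof (intro allI impI)
      fix r assume r: "r < c"
      have "(\<Sum>k<c. Bm $$ (r,k) * x k) = (Bm *\<^sub>v v) $ r"
        using mat_vec_sum[OF Bc v(1) r] by (simp add: x_def)
      then show "(\<Sum>k<c. Bm $$ (r,k) * x k) = 0" using v(3) r by simp
    qed
    then have "\<forall>row\<in>rowsB c c Bm. dotc c row x = 0" using dot_rowsB by blast
    then have "x \<in> Zs c (rhoR R C0 ` M)" using rows unfolding Zs_def by (auto simp: x_def)
    then have x0: "\<forall>k. x k = 0" using Z unfolding c_def by blast
    have "v = 0\<^sub>v c"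
    proof (rule eq_vecI)
      fix i assume "i < dim_vec (0\<^sub>v c)"
      then have "i < c" by simp
      with x0[rule_format, of i] show "v $ i = 0\<^sub>v c $ i" by (simp add: x_def)
    next
      show "dim_vec v = dim_vec (0\<^sub>v c)" using v(1) by simp
    qed
    then show False using v(2) by simp
  qed
  then have "Bm \<in> Units (ring_mat TYPE('a) c ())" by (rule det_non_zero_imp_unit[OF Bc])
  then obtain B' where B': "B' \<in> carrier_mat c c" "B' * Bm = 1\<^sub>m c" "Bm * B' = 1\<^sub>m c"
    unfolding Units_def by (auto simp: ring_mat_def)
  then show ?thesis unfolding Bm_def[symmetric] invertible_mat_def inverts_mat_def square_mat.simps
    using Bc B' by auto
qed



theorem lemma1:
  fixes L :: nat and A :: "int mat" and Lam :: "nat \<Rightarrow> (real ^ 'n) set"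
    and \<pi> \<pi>\<alpha> :: "nat \<Rightarrow> nat" and k :: nat
  assumes "A \<in> carrier_mat L L"
    and "invertible_mat (red A :: 'p::prime_card mod_ring mat)"
    and "\<forall>i \<in> Iset (2*L). is_lattice (Lam i)"
    and "\<forall>i \<in> Iset (2*L - 1). Lam i \<subseteq> Lam (i+1)"
    and "\<pi> permutes Iset (2*L)"
    and "\<forall>l \<in> Iset L. Lam (\<pi> (2*l - 1)) \<subseteq> Lam (\<pi> (2*l))"
    and "\<pi>\<alpha> permutes Iset L"
    and "k \<in> Iset (2*L - 1)"
  shows "let Mk = {m \<in> Iset L. k \<in> Jset TYPE('p) L A Lam \<pi> \<pi>\<alpha> (inv_into UNIV \<pi>\<alpha> m)};
             Lk = Lset L Lam \<pi> k
         in card Mk = card Lk \<and> invertible_mat (subA A Mk Lk :: 'p mod_ring mat)"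
proof -
  define R where "R = (red A :: 'p mod_ring mat)"
  have Rc: "R \<in> carrier_mat L L" using assms(1) unfolding R_def red_def by auto
  have Rinv: "invertible_mat R" using assms(2) unfolding R_def .
  have perm: "\<pi>\<alpha> permutes Iset L" using assms(7) .
  define Lk where "Lk = Lset L Lam \<pi> k"
  have LkI: "Lk \<subseteq> {1..L}" unfolding Lk_def Lset_def Iset_def by auto
  define C0 where "C0 = (\<lambda>j. j - 1) ` Lk"
  have C0sub: "C0 \<subseteq> {..<L}" using LkI unfolding C0_def by (auto simp: subset_iff)
  have injm1: "inj_on (\<lambda>j. j - (1::nat)) {1..}" by (rule inj_onI) auto
  have cardC0: "card C0 = card Lk" unfolding C0_def
    using LkI by (intro card_image inj_on_subset[OF injm1]) auto
  define c where "c = card C0"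
  define \<rho> where "\<rho> = rhoR R C0"
  define f where "f = (\<lambda>m. \<pi>\<alpha> m - 1)"
  have piI: "\<pi>\<alpha> m \<in> {1..L} \<longleftrightarrow> m \<in> {1..L}" for m
    using permutes_in_image[OF perm] unfolding Iset_def .
  have subA_eq: "subA A (\<pi>\<alpha> ` X) Lk = submatrix R (f ` X) C0" if "X \<subseteq> {1..L}" for X
  proof -
    have "\<pi>\<alpha> ` X \<inter> {1..} = \<pi>\<alpha> ` X" using that piI by (auto simp: subset_iff)
    moreover have "Lk \<inter> {1..} = Lk" using LkI by auto
    ultimately show ?thesis unfolding subA_def R_def C0_def f_def by (simp add: image_image)
  qed
  have fX: "f ` X \<subseteq> {..<L}" if "X \<subseteq> {1..L}" for X
  proof
    fix y assume "y \<in> f ` X"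
    then obtain m where m: "m \<in> X" "y = f m" by blast
    then have "\<pi>\<alpha> m \<in> {1..L}" using that piI by blast
    then show "y \<in> {..<L}" using m(2) unfolding f_def by auto
  qed
  have rank_eq: "rankF (subA A (\<pi>\<alpha> ` X) Lk :: 'p mod_ring mat) = rk c (\<rho> ` f ` X)" if "X \<subseteq> {1..L}" for X
    unfolding subA_eq[OF that] \<rho>_def c_def using rank_sub[OF Rc fX[OF that] C0sub] by simp
  have Ic: "Icompl L (Iset m) = {Suc m..L}" for m unfolding Icompl_def Iset_def by auto
  define P where "P = (\<lambda>m. \<rho> ` f ` {Suc m..L})"
  define Dr where "Dr = {m\<in>{1..L}. rk c (P (m-1)) = rk c (P m) + 1}"
  have inJ: "k \<in> Jset TYPE('p) L A Lam \<pi> \<pi>\<alpha> m \<longleftrightarrow> m \<in> Dr" if m: "m \<in> {1..L}" for m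
  proof -
    have "rankF (subA A (\<pi>\<alpha> ` Icompl L (Iset (m - 1))) (Lset L Lam \<pi> k) :: 'p mod_ring mat) = rk c (P (m-1))"
      unfolding Ic Lk_def[symmetric] P_def by (rule rank_eq) auto
    moreover have "rankF (subA A (\<pi>\<alpha> ` Icompl L (Iset m)) (Lset L Lam \<pi> k) :: 'p mod_ring mat) = rk c (P m)"
      unfolding Ic Lk_def[symmetric] P_def by (rule rank_eq) auto
    ultimately show ?thesis using assms(8) m unfolding Jset_def Dr_def by auto
  qed
  have DrI: "Dr \<subseteq> {1..L}" unfolding Dr_def by auto
  have Mk_eq: "{m \<in> Iset L. k \<in> Jset TYPE('p) L A Lam \<pi> \<pi>\<alpha> (inv_into UNIV \<pi>\<alpha> m)} = \<pi>\<alpha> ` Dr"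
  proof
    show "{m \<in> Iset L. k \<in> Jset TYPE('p) L A Lam \<pi> \<pi>\<alpha> (inv_into UNIV \<pi>\<alpha> m)} \<subseteq> \<pi>\<alpha> ` Dr"
    proof
      fix m assume "m \<in> {m \<in> Iset L. k \<in> Jset TYPE('p) L A Lam \<pi> \<pi>\<alpha> (inv_into UNIV \<pi>\<alpha> m)}"
      then have m: "m \<in> {1..L}" "k \<in> Jset TYPE('p) L A Lam \<pi> \<pi>\<alpha> (inv_into UNIV \<pi>\<alpha> m)" unfolding Iset_def by auto
      have im: "inv_into UNIV \<pi>\<alpha> m \<in> {1..L}" using piI[of "inv_into UNIV \<pi>\<alpha> m"] permutes_inverses(1)[OF perm, of m] m(1) by simp
      then have "inv_into UNIV \<pi>\<alpha> m \<in> Dr" using inJ m(2) by blast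
      moreover have "m = \<pi>\<alpha> (inv_into UNIV \<pi>\<alpha> m)" using permutes_inverses(1)[OF perm] by simp
      ultimately show "m \<in> \<pi>\<alpha> ` Dr" by blast
    qed
    show "\<pi>\<alpha> ` Dr \<subseteq> {m \<in> Iset L. k \<in> Jset TYPE('p) L A Lam \<pi> \<pi>\<alpha> (inv_into UNIV \<pi>\<alpha> m)}"
    proof
      fix m assume "m \<in> \<pi>\<alpha> ` Dr"
      then obtain m' where m': "m' \<in> Dr" "m = \<pi>\<alpha> m'" by blast
      have "inv_into UNIV \<pi>\<alpha> m = m'" using permutes_inverses(2)[OF perm] m' by simp
      moreover have "m \<in> {1..L}" using m' DrI piI by auto
      ultimately show "m \<in> {m \<in> Iset L. k \<in> Jset TYPE('p) L A Lam \<pi> \<pi>\<alpha> (inv_into UNIV \<pi>\<alpha> m)}"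
        using inJ m' DrI unfolding Iset_def by auto
    qed
  qed
  have main1: "card Dr = rk c (P 0)" and main2: "Zs c (\<rho> ` f ` Dr) = Zs c (P 0)"
    using main_abs[where \<rho>=\<rho> and f=f and N=L and c=c] unfolding P_def Dr_def by auto
  have f1L: "f ` {1..L} = {..<L}"
  proof -
    have pim: "\<pi>\<alpha> ` {1..L} = {1..L}" using permutes_image[OF perm] unfolding Iset_def .
    have "f ` {1..L} = (\<lambda>i. i - 1) ` (\<pi>\<alpha> ` {1..L})" unfolding f_def by (simp add: image_image)
    also have "\<dots> = (\<lambda>i. i - 1) ` {1..L}" unfolding pim ..
    also have "\<dots> = {..<L}"
    proof
      show "(\<lambda>i. i - 1) ` {1..L} \<subseteq> {..<L}" by auto
      show "{..<L} \<subseteq> (\<lambda>i. i - 1) ` {1..L}"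
      proof
        fix x assume "x \<in> {..<L}"
        then have "Suc x \<in> {1..L}" "x = Suc x - 1" by auto
        then show "x \<in> (\<lambda>i. i - 1) ` {1..L}" by blast
      qed
    qed
    finally show ?thesis .
  qed
  have P0: "P 0 = \<rho> ` {..<L}" unfolding P_def using f1L by simp
  have full: "\<forall>x\<in>Zs c (P 0). \<forall>k. x k = 0"
    unfolding P0 \<rho>_def c_def by (rule full_zero[OF Rc Rinv C0sub])
  have rkP0: "rk c (P 0) = c" by (rule rk_full[OF full])
  have injpi: "inj_on \<pi>\<alpha> Dr" using permutes_inj[OF perm] inj_on_subset by blast
  have card1: "card (\<pi>\<alpha> ` Dr) = card Lk"
    using card_image[OF injpi] main1 rkP0 cardC0 unfolding c_def by simp
  have injf: "inj_on f Dr"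
  proof (rule inj_onI)
    fix a b assume ab: "a \<in> Dr" "b \<in> Dr" "f a = f b"
    have "a \<in> {1..L}" "b \<in> {1..L}" using ab DrI by auto
    then have "\<pi>\<alpha> a \<in> {1..L}" "\<pi>\<alpha> b \<in> {1..L}" using piI by blast+
    then have "\<pi>\<alpha> a \<ge> 1" "\<pi>\<alpha> b \<ge> 1" by auto
    then have "\<pi>\<alpha> a = \<pi>\<alpha> b" using ab(3) unfolding f_def by simp
    then show "a = b" using permutes_inj[OF perm] by (simp add: inj_eq)
  qed
  have cardM: "card (f ` Dr) = card C0" using card_image[OF injf] main1 rkP0 unfolding c_def by simp
  have Zfull: "\<forall>x\<in>Zs (card C0) (rhoR R C0 ` (f ` Dr)). \<forall>k. x k = 0"
    using main2 full unfolding \<rho>_def c_def by simp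
  have inv2: "invertible_mat (subA A (\<pi>\<alpha> ` Dr) Lk :: 'p mod_ring mat)"
    unfolding subA_eq[OF DrI] by (rule inv_sub[OF Rc fX[OF DrI] C0sub cardM Zfull])
  show ?thesis unfolding Let_def Mk_eq Lk_def[symmetric] using card1 inv2 by simp
qed


end
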